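(* There exist a positive integer $N$ and a doubly-stochastic $N\times N$ matrix $A$ such that $$\mathrm{per}(A)\ <\ LMS(A):=\prod_{1\le i\le N}\ \sum_{1\le j\le N}A(i,j)\prod_{k\ne i}\bigl(1-A(k,j)\bigr).$$
   Context: A doubly-stochastic matrix is an entrywise non-negative square matrix all of whose row and column sums equal $1$; $\mathrm{per}$ is the permanent. (This disproves the conjecture that $\mathrm{per}(A)\ge LMS(A)$ for all doubly-stochastic $A$.) *)

theory Defs
  imports Complex_Main "HOL-Combinatorics.Permutations"
begin

text \<open>N x N real matrices are represented as functions nat => nat => real,
  with indices ranging over {..<N}.\<close>

definition doubly_stochastic :: "nat \<Rightarrow> (nat \<Rightarrow> nat \<Rightarrow> real) \<Rightarrow> bool" where
  "doubly_stochastic N A \<longleftrightarrow>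
     (\<forall>i<N. \<forall>j<N. 0 \<le> A i j) \<and>
     (\<forall>i<N. (\<Sum>j<N. A i j) = 1) \<and>
     (\<forall>j<N. (\<Sum>i<N. A i j) = 1)"

definition per :: "nat \<Rightarrow> (nat \<Rightarrow> nat \<Rightarrow> real) \<Rightarrow> real" where
  "per N A = (\<Sum>p | p permutes {..<N}. \<Prod>i<N. A i (p i))"

definition LMS :: "nat \<Rightarrow> (nat \<Rightarrow> nat \<Rightarrow> real) \<Rightarrow> real" where
  "LMS N A = (\<Prod>i<N. \<Sum>j<N. A i j * (\<Prod>k\<in>{..<N} - {i}. 1 - A k j))"

end

theory Submission
  imports Defs
begin

definition PF :: "nat \<Rightarrow> nat set \<Rightarrow> (nat \<Rightarrow> nat) set" where
  "PF k S = {f \<in> PiE {..<k} (\<lambda>_. S). inj_on f {..<k}}"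

definition G :: "(nat \<Rightarrow> nat \<Rightarrow> real) \<Rightarrow> nat \<Rightarrow> nat set \<Rightarrow> real" where
  "G A k S = (\<Sum>f\<in>PF k S. \<Prod>i<k. A i (f i))"

lemma finite_PF: "finite S \<Longrightarrow> finite (PF k S)"
  unfolding PF_def by (rule finite_subset[OF _ finite_PiE[of "{..<k}" "\<lambda>_. S"]]) auto

lemma G_0: "G A 0 S = 1"
  unfolding G_def PF_def by simp

lemma G_Suc:
  assumes fin: "finite S"
  shows "G A (Suc k) S = (\<Sum>j\<in>S. A k j * G A k (S - {j}))"
proof -
  have "(\<Sum>j\<in>S. A k j * G A k (S - {j})) = (\<Sum>j\<in>S. \<Sum>g\<in>PF k (S - {j}). A k j * (\<Prod>i<k. A i (g i)))"
    unfolding G_def by (simp add: sum_distrib_left)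
  also have "\<dots> = (\<Sum>(j,g)\<in>Sigma S (\<lambda>j. PF k (S - {j})). A k j * (\<Prod>i<k. A i (g i)))"
    using fin by (intro sum.Sigma) (auto intro: finite_PF)
  also have "\<dots> = (\<Sum>f\<in>PF (Suc k) S. \<Prod>i<Suc k. A i (f i))"
  proof (rule sum.reindex_bij_witness[where i = "\<lambda>f. (f k, f(k := undefined))" and j = "\<lambda>(j,g). g(k := j)"])
    fix a assume a: "a \<in> Sigma S (\<lambda>j. PF k (S - {j}))"
    then obtain j g where [simp]: "a = (j, g)" and j: "j \<in> S" and g: "g \<in> PF k (S - {j})" by auto
    from g have gu: "g k = undefined" unfolding PF_def by (auto simp: PiE_def extensional_def)
    show "(\<lambda>f. (f k, f(k := undefined))) ((\<lambda>(j,g). g(k := j)) a) = a"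
      using gu by auto
    show "(\<lambda>(j,g). g(k := j)) a \<in> PF (Suc k) S"
      using g j unfolding PF_def by (auto simp: PiE_def extensional_def lessThan_Suc inj_on_def)
    show "(\<Prod>i<Suc k. A i (((\<lambda>(j,g). g(k := j)) a) i)) = (case a of (j, g) \<Rightarrow> A k j * (\<Prod>i<k. A i (g i)))"
      by (simp add: lessThan_Suc mult.commute)
  next
    fix f assume f: "f \<in> PF (Suc k) S"
    then have fe: "f \<in> PiE {..<Suc k} (\<lambda>_. S)" and fi: "inj_on f {..<Suc k}" unfolding PF_def by auto
    show "(\<lambda>(j,g). g(k := j)) ((\<lambda>f. (f k, f(k := undefined))) f) = f" by auto
    have "f k \<in> S" using fe by auto
    moreover have "f(k := undefined) \<in> PF k (S - {f k})"
      unfolding PF_def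
    proof (intro CollectI conjI)
      show "f(k := undefined) \<in> PiE {..<k} (\<lambda>_. S - {f k})"
        using fe fi unfolding PiE_def extensional_def inj_on_def by auto
      show "inj_on (f(k := undefined)) {..<k}"
        using fi unfolding inj_on_def by auto
    qed
    ultimately show "(\<lambda>f. (f k, f(k := undefined))) f \<in> Sigma S (\<lambda>j. PF k (S - {j}))" by auto
  qed
  finally show ?thesis unfolding G_def ..
qed

lemma per_G: "per N A = G A N {..<N}"
proof -
  have "per N A = (\<Sum>p | p permutes {..<N}. \<Prod>i<N. A i (p i))" unfolding per_def ..
  also have "\<dots> = (\<Sum>f\<in>PF N {..<N}. \<Prod>i<N. A i (f i))"
  proof (rule sum.reindex_bij_witness[where i = "\<lambda>f i. if i < N then f i else i" and j = "\<lambda>p. restrict p {..<N}"])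
    fix p assume "p \<in> {p. p permutes {..<N}}"
    then have p: "p permutes {..<N}" by simp
    show "(\<lambda>i. if i < N then restrict p {..<N} i else i) = p"
    proof
      fix i show "(if i < N then restrict p {..<N} i else i) = p i"
        using p by (auto simp: permutes_not_in)
    qed
    show "restrict p {..<N} \<in> PF N {..<N}"
      unfolding PF_def using p permutes_inj_on[OF p] permutes_in_image[OF p] by auto
    show "(\<Prod>i<N. A i (restrict p {..<N} i)) = (\<Prod>i<N. A i (p i))" by simp
  next
    fix f assume f: "f \<in> PF N {..<N}"
    then have fe: "f \<in> PiE {..<N} (\<lambda>_. {..<N})" and fi: "inj_on f {..<N}" unfolding PF_def by auto
    show "restrict (\<lambda>i. if i < N then f i else i) {..<N} = f"
      using fe by (auto simp: PiE_def extensional_def restrict_def)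
    let ?g = "\<lambda>i. if i < N then f i else i"
    have im: "f ` {..<N} = {..<N}"
      using fe fi by (intro endo_inj_surj) auto
    have "bij_betw ?g {..<N} {..<N}"
      unfolding bij_betw_def
    proof
      show "inj_on ?g {..<N}" using fi unfolding inj_on_def by auto
      show "?g ` {..<N} = {..<N}" using im by (auto simp: image_def)
    qed
    then show "?g \<in> {p. p permutes {..<N}}"
      by (auto intro!: bij_imp_permutes split: if_splits)
  qed
  finally show ?thesis unfolding G_def .
qed

lemma G_sparse:
  assumes fin: "finite S" and d: "distinct L" and z: "\<And>j. j \<notin> set L \<Longrightarrow> A k j = 0"
  shows "G A (Suc k) S = sum_list (map (\<lambda>j. if j \<in> S then A k j * G A k (S - {j}) else 0) L)"
proof -
  have "G A (Suc k) S = (\<Sum>j\<in>S. A k j * G A k (S - {j}))" by (rule G_Suc[OF fin])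
  also have "\<dots> = (\<Sum>j\<in>S \<inter> set L. A k j * G A k (S - {j}))"
    using fin z by (intro sum.mono_neutral_right) auto
  also have "\<dots> = (\<Sum>j\<in>set L. if j \<in> S then A k j * G A k (S - {j}) else 0)"
    by (subst Int_commute, rule sum.inter_restrict) simp
  also have "\<dots> = sum_list (map (\<lambda>j. if j \<in> S then A k j * G A k (S - {j}) else 0) L)"
    using d by (simp add: sum_list_distinct_conv_sum_set)
  finally show ?thesis .
qed

definition SL :: "(nat \<times> nat) list list" where
  "SL = [[(0, 29), (1, 43), (7, 28)],
   [(7, 72), (9, 28)],
   [(2, 4), (4, 1), (9, 72), (12, 23)],
   [(1, 57), (5, 20), (8, 23)],
   [(0, 71), (3, 22), (11, 7)],
   [(4, 16), (8, 77), (11, 7)],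
   [(5, 80), (10, 20)],
   [(6, 23), (12, 77)],
   [(11, 86), (13, 14)],
   [(4, 83), (13, 17)],
   [(10, 80), (13, 20)],
   [(2, 22), (3, 78)],
   [(6, 51), (13, 49)],
   [(2, 74), (6, 26)]]"

definition Bn :: "nat \<Rightarrow> nat \<Rightarrow> nat" where
  "Bn i j = (if i < 14 then (case map_of (SL ! i) j of None \<Rightarrow> 0 | Some w \<Rightarrow> w) else 0)"

fun pc :: "(nat \<times> nat) list list \<Rightarrow> nat list \<Rightarrow> nat" where
  "pc [] used = 1"
| "pc (r # rs) used = sum_list (map (\<lambda>(j,w). if j \<in> set used then 0 else w * pc rs (j # used)) r)"

definition Lnat :: nat where
  "Lnat = prod_list (map (\<lambda>i. sum_list (map (\<lambda>j. Bn i j * prod_list (map (\<lambda>k. 100 - Bn k j) (filter (\<lambda>k. k \<noteq> i) [0..<14]))) [0..<14])) [0..<14])"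

lemma pc_val: "pc (rev SL) [] = 7515146068869226269081600"
  by (simp add: SL_def split del: if_split)

lemma key_ineq: "pc (rev SL) [] * 100 ^ 182 < Lnat"
  unfolding pc_val Lnat_def by (simp add: Bn_def SL_def upt_rec split del: if_split)

lemma rows_ok: "list_all (\<lambda>i. sum_list (map (Bn i) [0..<14]) = 100) [0..<14]"
  by (simp add: Bn_def SL_def upt_rec)

lemma cols_ok: "list_all (\<lambda>j. sum_list (map (\<lambda>i. Bn i j) [0..<14]) = 100) [0..<14]"
  by (simp add: Bn_def SL_def upt_rec)

lemma le100_l: "list_all (\<lambda>i. list_all (\<lambda>j. Bn i j \<le> 100) [0..<14]) [0..<14]"
  by (simp add: Bn_def SL_def upt_rec)

lemma cols14: "list_all (\<lambda>r. list_all (\<lambda>(j,w). j < 14) r) SL"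
  by (simp add: SL_def)

lemma SL_len: "length SL = 14" by (simp add: SL_def)

lemma SL_dist: "k < 14 \<Longrightarrow> distinct (map fst (SL ! k))"
proof -
  assume k: "k < 14"
  have "list_all (\<lambda>r. distinct (map fst r)) SL" by (simp add: SL_def)
  then show ?thesis using k SL_len by (simp add: list_all_length)
qed

lemma SL_col:
  assumes k: "k < 14" and m: "(j, w) \<in> set (SL ! k)" shows "j < 14"
proof -
  have "list_all (\<lambda>(j,w). j < 14) (SL ! k)" using cols14 SL_len k by (simp add: list_all_length)
  then show ?thesis using m by (auto simp: list_all_iff)
qed

lemma Bn_SL: "k < 14 \<Longrightarrow> (j, w) \<in> set (SL ! k) \<Longrightarrow> Bn k j = w"
  unfolding Bn_def using SL_dist map_of_is_SomeI by fastforce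

lemma Bn_le: "Bn i j \<le> 100"
proof (cases "i < 14 \<and> j < 14")
  case True then show ?thesis using le100_l by (simp add: list_all_iff)
next
  case False
  then have "i \<ge> 14 \<or> (i < 14 \<and> j \<ge> 14)" by auto
  then show ?thesis
  proof
    assume "i \<ge> 14" then show ?thesis by (simp add: Bn_def)
  next
    assume a: "i < 14 \<and> j \<ge> 14"
    have "map_of (SL ! i) j = None"
      using a SL_col by (force simp: map_of_eq_None_iff)
    then show ?thesis by (simp add: Bn_def)
  qed
qed

definition Am :: "nat \<Rightarrow> nat \<Rightarrow> real" where
  "Am i j = real (Bn i j) / 100"

lemma Am_zero: "j \<notin> set (map fst (SL ! k)) \<Longrightarrow> Am k j = 0"
proof -
  assume h: "j \<notin> set (map fst (SL ! k))"
  have "map_of (SL ! k) j = None" using h by (simp add: map_of_eq_None_iff)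
  then show ?thesis by (simp add: Am_def Bn_def)
qed

lemma sum_list_div: "real (sum_list (map f xs)) / c = sum_list (map (\<lambda>x. real (f x) / c) xs)"
  by (induct xs) (simp_all add: add_divide_distrib)

lemma G_pc: "k \<le> 14 \<Longrightarrow> G Am k ({..<14} - set used) = real (pc (rev (take k SL)) used) / 100 ^ k"
proof (induction k arbitrary: used)
  case 0 then show ?case by (simp add: G_0)
next
  case (Suc k)
  have k: "k < 14" using Suc.prems by simp
  let ?S = "{..<14} - set used"
  let ?R = "rev (take k SL)"
  have rv: "rev (take (Suc k) SL) = SL ! k # ?R"
    using k SL_len by (simp add: take_Suc_conv_app_nth)
  have "G Am (Suc k) ?S = sum_list (map (\<lambda>j. if j \<in> ?S then Am k j * G Am k (?S - {j}) else 0) (map fst (SL ! k)))"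
    by (rule G_sparse[OF _ SL_dist[OF k] Am_zero]) auto
  also have "\<dots> = sum_list (map (\<lambda>(j,w). if j \<in> ?S then Am k j * G Am k (?S - {j}) else 0) (SL ! k))"
    by (simp add: case_prod_unfold comp_def)
  also have "\<dots> = sum_list (map (\<lambda>x. real ((\<lambda>(j,w). if j \<in> set used then 0 else w * pc ?R (j # used)) x) / 100 ^ Suc k) (SL ! k))"
  proof (rule arg_cong[where f = sum_list], rule map_cong[OF refl])
    fix x assume x: "x \<in> set (SL ! k)"
    obtain j w where xe: "x = (j, w)" by (cases x)
    have j: "j < 14" using SL_col[OF k] x xe by simp
    have b: "Bn k j = w" using Bn_SL[OF k] x xe by simp
    have e: "?S - {j} = {..<14} - set (j # used)" by auto
    have a: "Am k j = real w / 100" using b by (simp add: Am_def)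
    show "(\<lambda>(j,w). if j \<in> ?S then Am k j * G Am k (?S - {j}) else 0) x =
          real ((\<lambda>(j,w). if j \<in> set used then 0 else w * pc ?R (j # used)) x) / 100 ^ Suc k"
      unfolding xe using j Suc.IH[of "j # used"] k e by (simp add: a)
  qed
  also have "\<dots> = real (pc (rev (take (Suc k) SL)) used) / 100 ^ Suc k"
    unfolding rv by (simp add: sum_list_div)
  finally show ?case .
qed

lemma per_val: "per 14 Am = real (pc (rev SL) []) / 100 ^ 14"
  using G_pc[of 14 "[]"] SL_len by (simp add: per_G)

lemma Lnat_set: "Lnat = (\<Prod>i<14. \<Sum>j<14. Bn i j * (\<Prod>k\<in>{..<14}-{i}. (100 - Bn k j)))"
proof -
  have D: "\<And>i. set (filter (\<lambda>k. k \<noteq> i) [0..<14]) = {..<14::nat} - {i}" by auto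
  show ?thesis unfolding Lnat_def
    by (simp add: prod.distinct_set_conv_list[symmetric] sum_list_distinct_conv_sum_set D atLeast0LessThan del: set_filter)
qed

lemma LMS_val: "LMS 14 Am = real Lnat / 100 ^ 196"
proof -
  have inner: "Am i j * (\<Prod>k\<in>{..<14}-{i}. 1 - Am k j) = real (Bn i j * (\<Prod>k\<in>{..<14}-{i}. (100 - Bn k j))) / 100^14"
    if i: "i < 14" for i j :: nat
  proof -
    have c: "card ({..<14::nat} - {i}) = 13" using i by simp
    have "(\<Prod>k\<in>{..<14}-{i}. 1 - Am k j) = (\<Prod>k\<in>{..<14}-{i}. real (100 - Bn k j) / 100)"
      by (rule prod.cong) (auto simp: Am_def of_nat_diff[OF Bn_le] field_simps)
    also have "\<dots> = real (\<Prod>k\<in>{..<14}-{i}. (100 - Bn k j)) / 100^13"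
      by (simp add: prod_dividef c)
    finally show ?thesis by (simp add: Am_def)
  qed
  have row: "(\<Sum>j<14. Am i j * (\<Prod>k\<in>{..<14}-{i}. 1 - Am k j)) = real (\<Sum>j<14. Bn i j * (\<Prod>k\<in>{..<14}-{i}. (100 - Bn k j))) / 100^14"
    if i: "i < 14" for i :: nat
    using i by (simp add: inner sum_divide_distrib)
  have "LMS 14 Am = (\<Prod>i<14. real (\<Sum>j<14. Bn i j * (\<Prod>k\<in>{..<14}-{i}. (100 - Bn k j))) / 100^14)"
    unfolding LMS_def by (rule prod.cong) (simp_all add: row)
  also have "\<dots> = real (\<Prod>i<14. \<Sum>j<14. Bn i j * (\<Prod>k\<in>{..<14}-{i}. (100 - Bn k j))) / (100^14)^14"
    by (simp only: prod_dividef of_nat_prod prod_constant card_lessThan)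
  also have "\<dots> = real Lnat / 100 ^ 196"
    unfolding Lnat_set by (simp only: power_mult[symmetric]) simp
  finally show ?thesis .
qed

lemma row_sum: "i < 14 \<Longrightarrow> (\<Sum>j<14. Am i j) = 1"
proof -
  assume i: "i < 14"
  have "sum_list (map (Bn i) [0..<14]) = 100" using rows_ok i by (simp add: list_all_iff)
  then have "(\<Sum>j<14. Bn i j) = 100" by (simp add: sum_list_distinct_conv_sum_set atLeast0LessThan)
  then have "(\<Sum>j<14. real (Bn i j)) = 100" by (metis of_nat_sum of_nat_numeral)
  then show ?thesis by (simp add: Am_def sum_divide_distrib[symmetric])
qed

lemma col_sum: "j < 14 \<Longrightarrow> (\<Sum>i<14. Am i j) = 1"
proof -
  assume j: "j < 14"
  have "sum_list (map (\<lambda>i. Bn i j) [0..<14]) = 100" using cols_ok j by (simp add: list_all_iff)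
  then have "(\<Sum>i<14. Bn i j) = 100" by (simp add: sum_list_distinct_conv_sum_set atLeast0LessThan)
  then have "(\<Sum>i<14. real (Bn i j)) = 100" by (metis of_nat_sum of_nat_numeral)
  then show ?thesis by (simp add: Am_def sum_divide_distrib[symmetric])
qed

lemma per_lt: "per 14 Am < LMS 14 Am"
proof -
  have k: "real (pc (rev SL) []) * 100 ^ 182 < real Lnat"
    using key_ineq by (metis of_nat_less_iff of_nat_mult of_nat_power of_nat_numeral)
  have "per 14 Am = real (pc (rev SL) []) * 100 ^ 182 / 100 ^ 196"
    unfolding per_val by (simp add: power_add[symmetric])
  also have "\<dots> < real Lnat / 100 ^ 196"
    using k by (simp add: divide_strict_right_mono)
  finally show ?thesis unfolding LMS_val .
qed

theorem mainTheorem15: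
  shows "\<exists>N::nat. N > 0 \<and> (\<exists>A. doubly_stochastic N A \<and> per N A < LMS N A)"
proof (intro exI conjI)
  show "(14::nat) > 0" by simp
  show "doubly_stochastic 14 Am"
    unfolding doubly_stochastic_def using row_sum col_sum by (simp add: Am_def)
  show "per 14 Am < LMS 14 Am" by (rule per_lt)
qed

end
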